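(* Let $s$ be a positive rational number, $r$ a rational number, $|q|<1$ and $k\neq1$. Then \begin{multline*} \sum_{j,n\ge0}\frac{(1-kq^{2n+2j})(1+q^{2rj})(k;q)_{n}(k;q)_{n+2j}\,q^{sj^2-jr+2nj+n^2}(-1)^j}{(1-k)(q;q)_{n}(q;q)_{n+2j}}\\ =\frac{(kq;q)_\infty(q^{s-r},q^{s+r},q^{2s};q^{2s})_\infty}{(q;q)_\infty}+\frac{(kq;q)_\infty}{(q;q)_\infty}. \end{multline*} In particular ($s=5/2$, $r=1/2$) the right side equals $\frac{(kq;q)_\infty}{(q,q^4;q^5)_\infty}+\frac{(kq;q)_\infty}{(q;q)_\infty}$.
   Context: Notation: $(x;q)_n=\prod_{i=0}^{n-1}(1-xq^i)$, $(x;q)_\infty=\prod_{i\ge0}(1-xq^i)$, $(x_1,\dots,x_j;q)_\infty=(x_1;q)_\infty\cdots(x_j;q)_\infty$. *)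

theory Defs
  imports "HOL-Analysis.Analysis"
begin

definition qpoch :: "complex \<Rightarrow> complex \<Rightarrow> nat \<Rightarrow> complex" where
  "qpoch x q n = (\<Prod>i<n. 1 - x * q ^ i)"

definition qpoch_inf :: "complex \<Rightarrow> complex \<Rightarrow> complex" where
  "qpoch_inf x q = (\<Prod>i. 1 - x * q ^ i)"

definition qpow :: "complex \<Rightarrow> real \<Rightarrow> complex" where
  "qpow q a = exp (complex_of_real a * Ln q)"

end

theory Submission
  imports Defs
begin


lemma qpoch_0 [simp]: "qpoch x q 0 = 1"
  by (simp add: qpoch_def)

lemma qpoch_Suc: "qpoch x q (Suc n) = qpoch x q n * (1 - x * q ^ n)"
  by (simp add: qpoch_def)

lemma qpoch_conv:
  fixes x q :: complex
  assumes "norm q < 1"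
  shows "convergent_prod (\<lambda>i. 1 - x * q ^ i)"
proof -
  have "summable (\<lambda>i. norm x * norm q ^ i)"
    using assms by (intro summable_mult summable_geometric) auto
  moreover have "(\<lambda>i. norm ((1 - x * q ^ i) - 1)) = (\<lambda>i. norm x * norm q ^ i)"
    by (simp add: norm_mult norm_power)
  ultimately have "summable (\<lambda>i. norm ((1 - x * q ^ i) - 1))" by simp
  thus ?thesis
    by (intro abs_convergent_prod_imp_convergent_prod summable_imp_abs_convergent_prod)
qed

lemma qpoch_tendsto:
  assumes "norm q < 1"
  shows "(\<lambda>n. qpoch x q n) \<longlonglongrightarrow> qpoch_inf x q"
proof -
  have "(\<lambda>n. \<Prod>i\<le>n. 1 - x * q ^ i) \<longlonglongrightarrow> qpoch_inf x q"
    unfolding qpoch_inf_def by (rule convergent_prod_LIMSEQ[OF qpoch_conv[OF assms]])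
  hence "(\<lambda>n. qpoch x q (Suc n)) \<longlonglongrightarrow> qpoch_inf x q"
    by (simp add: qpoch_def lessThan_Suc_atMost)
  thus ?thesis by (rule LIMSEQ_imp_Suc)
qed

lemma qpoch_inf_nz:
  assumes "norm q < 1" "\<And>i. x * q ^ i \<noteq> 1"
  shows "qpoch_inf x q \<noteq> 0"
  unfolding qpoch_inf_def
  by (rule prodinf_nonzero[OF qpoch_conv[OF assms(1)]]) (use assms(2) in auto)

lemma qpoch_bound:
  assumes "norm q < 1"
  shows "norm (qpoch x q n) \<le> exp (norm x / (1 - norm q))"
proof -
  have "norm (qpoch x q n) = (\<Prod>i<n. norm (1 - x * q ^ i))"
    by (simp add: qpoch_def prod_norm)
  also have "\<dots> \<le> (\<Prod>i<n. 1 + norm x * norm q ^ i)"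
    by (intro prod_mono conjI) (auto intro!: order_trans[OF norm_triangle_ineq4] simp: norm_mult norm_power)
  also have "\<dots> \<le> exp (\<Sum>i<n. norm x * norm q ^ i)"
    by (intro prod_le_exp_sum) auto
  also have "(\<Sum>i<n. norm x * norm q ^ i) \<le> norm x / (1 - norm q)"
  proof -
    have "summable (\<lambda>i. norm q ^ i)" using assms by (intro summable_geometric) auto
    hence "(\<Sum>i<n. norm q ^ i) \<le> (\<Sum>i. norm q ^ i)"
      by (intro sum_le_suminf) auto
    also have "\<dots> = 1 / (1 - norm q)" using assms by (simp add: suminf_geometric)
    finally show ?thesis
      by (simp add: sum_distrib_left[symmetric] divide_inverse mult_left_mono)
  qed
  hence "exp (\<Sum>i<n. norm x * norm q ^ i) \<le> exp (norm x / (1 - norm q))" by simp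
  finally show ?thesis .
qed

definition qlow :: "complex \<Rightarrow> real" where
  "qlow q = prodinf (\<lambda>i. 1 - norm q ^ Suc i)"

lemma qlow_pos:
  assumes "norm q < 1"
  shows "qlow q > 0"
proof -
  have "summable (\<lambda>i. norm q * norm q ^ i)"
    using assms by (intro summable_mult summable_geometric) auto
  hence "summable (\<lambda>i. norm ((1 - norm q ^ Suc i) - 1))" by simp
  hence c: "convergent_prod (\<lambda>i. 1 - norm q ^ Suc i)"
    by (intro abs_convergent_prod_imp_convergent_prod summable_imp_abs_convergent_prod)
  have "norm q ^ Suc i < 1" for i
    using power_strict_mono[of "norm q" 1 "Suc i"] assms by simp
  then show ?thesis unfolding qlow_def
    by (intro less_0_prodinf[OF c]) auto
qed

lemma qpoch_lower:
  assumes "norm q < 1"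
  shows "norm (qpoch q q n) \<ge> qlow q"
proof -
  have "summable (\<lambda>i. norm q * norm q ^ i)"
    using assms by (intro summable_mult summable_geometric) auto
  hence "summable (\<lambda>i. norm ((1 - norm q ^ Suc i) - 1))" by simp
  hence c: "convergent_prod (\<lambda>i. 1 - norm q ^ Suc i)"
    by (intro abs_convergent_prod_imp_convergent_prod summable_imp_abs_convergent_prod)
  have le1: "norm q ^ Suc i \<le> 1" for i
    using power_strict_mono[of "norm q" 1 "Suc i"] assms by simp
  have "qlow q \<le> (\<Prod>i<n. 1 - norm q ^ Suc i)"
    unfolding qlow_def
    by (rule prod_ge_prodinf) (use c le1 in \<open>auto simp: convergent_prod_has_prod\<close>)
  also have "\<dots> \<le> (\<Prod>i<n. norm (1 - q * q ^ i))"
  proof (intro prod_mono conjI)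
    fix i show "0 \<le> 1 - norm q ^ Suc i" using le1[of i] by simp
    have "norm (1::complex) - norm (q * q ^ i) \<le> norm (1 - q * q ^ i)"
      by (rule norm_triangle_ineq2)
    thus "1 - norm q ^ Suc i \<le> norm (1 - q * q ^ i)" by (simp add: norm_mult norm_power)
  qed
  also have "\<dots> = norm (qpoch q q n)"
    by (simp add: qpoch_def prod_norm)
  finally show ?thesis .
qed

lemma qpoch_nz:
  assumes "norm q < 1"
  shows "qpoch q q n \<noteq> 0"
  using qpoch_lower[OF assms, of n] qlow_pos[OF assms] by auto


lemma alg_step2:
  fixes A B C D E x y q k c1 d1 d2 :: complex
  assumes nz: "C \<noteq> 0" "D \<noteq> 0" "c1 \<noteq> 0" "d1 \<noteq> 0" "d2 \<noteq> 0"
    and ce: "c1 = 1 - q*x" "d1 = 1 - q*(x*y^2)" "d2 = 1 - q*(x*y^2)*q"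
  shows "(1 - y^2*q) * (A*(1-k*x)) * (B*(1-k*(x*y^2))*(1-k*(x*y^2)*q)) * (E*x^4*y^2*q^3) / ((C*c1) * (D*d1*d2))
= (1 - y^2*q) * A * (B*(1-k*(x*y^2))) * (E*x^2) / (C * (D*d1))
 + (1 - k*(x^2*y^2*q^2)) * (A*(1-k*x)) * (B*(1-k*(x*y^2))) * (E*x^2*y^2*q) / ((C*c1) * (D*d1))
 - (1 - k*(x^2*y^2*q^2)) * A * (B*(1-k*(x*y^2))*(1-k*(x*y^2)*q)) * (E*x^2) / (C * (D*d1*d2))"
proof -
  define K where "K = A * B * E / (C * D * c1 * d1 * d2)"
  have core: "(1 - y^2*q)*(1-k*x)*(1-k*(x*y^2))*(1-k*(x*y^2)*q)*(x^4*y^2*q^3) =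
  (1 - y^2*q)*(1-k*(x*y^2))*x^2*c1*d2
  + (1 - k*(x^2*y^2*q^2))*(1-k*x)*(1-k*(x*y^2))*(x^2*y^2*q)*d2
  - (1 - k*(x^2*y^2*q^2))*(1-k*(x*y^2))*(1-k*(x*y^2)*q)*x^2*c1"
    unfolding ce by algebra
  have t1: "(1 - y^2*q) * (A*(1-k*x)) * (B*(1-k*(x*y^2))*(1-k*(x*y^2)*q)) * (E*x^4*y^2*q^3) / ((C*c1) * (D*d1*d2))
    = K * ((1 - y^2*q)*(1-k*x)*(1-k*(x*y^2))*(1-k*(x*y^2)*q)*(x^4*y^2*q^3))"
    unfolding K_def by (simp add: field_simps)
  have t2: "(1 - y^2*q) * A * (B*(1-k*(x*y^2))) * (E*x^2) / (C * (D*d1)) = K * ((1 - y^2*q)*(1-k*(x*y^2))*x^2*c1*d2)"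
    unfolding K_def using nz by (simp add: field_simps)
  have t3: "(1 - k*(x^2*y^2*q^2)) * (A*(1-k*x)) * (B*(1-k*(x*y^2))) * (E*x^2*y^2*q) / ((C*c1) * (D*d1))
    = K * ((1 - k*(x^2*y^2*q^2))*(1-k*x)*(1-k*(x*y^2))*(x^2*y^2*q)*d2)"
    unfolding K_def using nz by (simp add: field_simps)
  have t4: "(1 - k*(x^2*y^2*q^2)) * A * (B*(1-k*(x*y^2))*(1-k*(x*y^2)*q)) * (E*x^2) / (C * (D*d1*d2))
    = K * ((1 - k*(x^2*y^2*q^2))*(1-k*(x*y^2))*(1-k*(x*y^2)*q)*x^2*c1)"
    unfolding K_def using nz by (simp add: field_simps)
  show ?thesis unfolding t1 t2 t3 t4 core by (simp add: algebra_simps)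
qed

lemma qpoch_Suc2: "qpoch x q (Suc (Suc n)) = qpoch x q n * (1 - x * q ^ n) * (1 - x * q ^ n * q)"
  by (simp add: qpoch_def mult.commute mult.left_commute)

definition uu :: "complex \<Rightarrow> complex \<Rightarrow> nat \<Rightarrow> nat \<Rightarrow> complex" where
  "uu k q j n = (1 - k * q ^ (2 * n + 2 * j)) * qpoch k q n * qpoch k q (n + 2 * j) * q ^ (2 * n * j + n ^ 2)
     / (qpoch q q n * qpoch q q (n + 2 * j))"

definition gg :: "complex \<Rightarrow> complex \<Rightarrow> nat \<Rightarrow> nat \<Rightarrow> complex" where
  "gg k q j m = (1 - q ^ (2 * j + 1)) * qpoch k q m * qpoch k q (m + 2 * j + 1) * q ^ (m ^ 2 + 2 * m * j + 2 * m)
     / (qpoch q q m * qpoch q q (m + 2 * j + 1))"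

lemma one_minus_qpow_nz:
  fixes q :: complex
  assumes "norm q < 1" "n > 0"
  shows "1 - q ^ n \<noteq> 0"
proof
  assume "1 - q ^ n = 0"
  hence "q ^ n = 1" by simp
  hence "norm (q ^ n) = 1" by simp
  moreover have "norm (q ^ n) < 1"
    using power_strict_mono[of "norm q" 1 n] assms by (simp add: norm_power)
  ultimately show False by simp
qed

lemma gg_step:
  fixes q k :: complex
  assumes q: "norm q < 1"
  shows "gg k q j (Suc m) = gg k q j m + uu k q j (Suc m) - uu k q (Suc j) m"
proof -
  define x where "x = q ^ m"
  define y where "y = q ^ j"
  define E where "E = q ^ (m ^ 2 + 2 * m * j)"
  define A where "A = qpoch k q m"
  define B where "B = qpoch k q (m + 2 * j)"
  define C where "C = qpoch q q m"
  define D where "D = qpoch q q (m + 2 * j)"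
  define c1 where "c1 = 1 - q * x"
  define d1 where "d1 = 1 - q * (x * y ^ 2)"
  define d2 where "d2 = 1 - q * (x * y ^ 2) * q"
  have xy: "q ^ (m + 2 * j) = x * y ^ 2"
    unfolding x_def y_def power_add by (simp only: power_mult mult.commute[of 2 j])
  have sa: "Suc m + 2 * j + 1 = Suc (Suc (m + 2 * j))" by simp
  have sb: "m + 2 * j + 1 = Suc (m + 2 * j)" by simp
  have sc: "Suc m + 2 * j = Suc (m + 2 * j)" by simp
  have sd: "m + 2 * Suc j = Suc (Suc (m + 2 * j))" by simp
  have nz: "C \<noteq> 0" "D \<noteq> 0" "c1 \<noteq> 0" "d1 \<noteq> 0" "d2 \<noteq> 0"
  proof -
    show "C \<noteq> 0" "D \<noteq> 0" using qpoch_nz[OF q] by (auto simp: C_def D_def)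
    have "c1 = 1 - q ^ Suc m" by (simp add: c1_def x_def)
    thus "c1 \<noteq> 0" using one_minus_qpow_nz[OF q, of "Suc m"] by simp
    have "d1 = 1 - q ^ Suc (m + 2 * j)" unfolding d1_def xy[symmetric] by simp
    thus "d1 \<noteq> 0" using one_minus_qpow_nz[OF q, of "Suc (m + 2 * j)"] by simp
    have "d2 = 1 - q ^ Suc (Suc (m + 2 * j))" unfolding d2_def xy[symmetric] by (simp add: mult.commute)
    thus "d2 \<noteq> 0" using one_minus_qpow_nz[OF q, of "Suc (Suc (m + 2 * j))"] by simp
  qed
  have k1: "qpoch k q (Suc m) = A * (1 - k * x)" by (simp only: qpoch_Suc A_def x_def)
  have k2: "qpoch k q (m + 2 * j + 1) = B * (1 - k * (x * y ^ 2))"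
    unfolding sb qpoch_Suc xy B_def ..
  have k3: "qpoch k q (Suc m + 2 * j + 1) = B * (1 - k * (x * y ^ 2)) * (1 - k * (x * y ^ 2) * q)"
    unfolding sa qpoch_Suc2 xy B_def ..
  have k4: "qpoch k q (Suc m + 2 * j) = B * (1 - k * (x * y ^ 2))"
    unfolding sc qpoch_Suc xy B_def ..
  have k5: "qpoch k q (m + 2 * Suc j) = B * (1 - k * (x * y ^ 2)) * (1 - k * (x * y ^ 2) * q)"
    unfolding sd qpoch_Suc2 xy B_def ..
  have c2: "qpoch q q (Suc m) = C * c1" by (simp only: qpoch_Suc C_def c1_def x_def)
  have c3: "qpoch q q (m + 2 * j + 1) = D * d1" unfolding sb qpoch_Suc xy D_def d1_def ..
  have c4: "qpoch q q (Suc m + 2 * j + 1) = D * d1 * d2" unfolding sa qpoch_Suc2 xy D_def d1_def d2_def ..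
  have c5: "qpoch q q (Suc m + 2 * j) = D * d1" unfolding sc qpoch_Suc xy D_def d1_def ..
  have c6: "qpoch q q (m + 2 * Suc j) = D * d1 * d2" unfolding sd qpoch_Suc2 xy D_def d1_def d2_def ..
  have e1: "q ^ (2 * j + 1) = y ^ 2 * q"
  proof -
    have h: "2 * j + 1 = j * 2 + 1" by simp
    show ?thesis unfolding h power_add power_mult y_def by simp
  qed
  have e2: "q ^ (m ^ 2 + 2 * m * j + 2 * m) = E * x ^ 2"
  proof -
    have h: "m ^ 2 + 2 * m * j + 2 * m = (m ^ 2 + 2 * m * j) + m * 2" by simp
    show ?thesis unfolding h E_def x_def by (simp only: power_add power_mult)
  qed
  have e3: "q ^ ((Suc m) ^ 2 + 2 * Suc m * j + 2 * Suc m) = E * x ^ 4 * y ^ 2 * q ^ 3"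
  proof -
    have h: "(Suc m) ^ 2 + 2 * Suc m * j + 2 * Suc m = (m ^ 2 + 2 * m * j) + m * 4 + j * 2 + 3"
      by (simp add: power2_eq_square algebra_simps)
    show ?thesis unfolding h E_def x_def y_def by (simp only: power_add power_mult mult_ac)
  qed
  have e4: "q ^ (2 * Suc m + 2 * j) = x ^ 2 * y ^ 2 * q ^ 2"
  proof -
    have h: "2 * Suc m + 2 * j = m * 2 + j * 2 + 2" by simp
    show ?thesis unfolding h x_def y_def by (simp only: power_add power_mult mult_ac)
  qed
  have e5: "q ^ (2 * Suc m * j + (Suc m) ^ 2) = E * x ^ 2 * y ^ 2 * q"
  proof -
    have h: "2 * Suc m * j + (Suc m) ^ 2 = (m ^ 2 + 2 * m * j) + m * 2 + j * 2 + 1"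
      by (simp add: power2_eq_square algebra_simps)
    show ?thesis unfolding h E_def x_def y_def by (simp only: power_add power_mult mult_ac power_one_right)
  qed
  have e6: "q ^ (2 * m + 2 * Suc j) = x ^ 2 * y ^ 2 * q ^ 2"
  proof -
    have h: "2 * m + 2 * Suc j = m * 2 + j * 2 + 2" by simp
    show ?thesis unfolding h x_def y_def by (simp only: power_add power_mult mult_ac)
  qed
  have e7: "q ^ (2 * m * Suc j + m ^ 2) = E * x ^ 2"
  proof -
    have h: "2 * m * Suc j + m ^ 2 = (m ^ 2 + 2 * m * j) + m * 2"
      by (simp add: power2_eq_square algebra_simps)
    show ?thesis unfolding h E_def x_def by (simp only: power_add power_mult mult_ac)
  qed
  have ce: "c1 = 1 - q*x" "d1 = 1 - q*(x*y^2)" "d2 = 1 - q*(x*y^2)*q"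
    by (simp_all add: c1_def d1_def d2_def)
  show ?thesis
    unfolding gg_def uu_def k1 k2 k3 k4 k5 c2 c3 c4 c5 c6 e1 e2 e3 e4 e5 e6 e7
    unfolding A_def[symmetric] C_def[symmetric]
    by (rule alg_step2[OF nz ce])
qed


definition Cst :: "complex \<Rightarrow> complex \<Rightarrow> real" where
  "Cst k q = (2 + norm k) * exp (norm k / (1 - norm q)) ^ 2 / qlow q ^ 2"

lemma Cst_nonneg: "norm q < 1 \<Longrightarrow> Cst k q \<ge> 0"
  unfolding Cst_def by simp

lemma frac_bound:
  fixes a q k :: complex and e n1 n2 n3 n4 :: nat
  assumes q: "norm q < 1" and a: "norm a \<le> 2 + norm k"
  shows "norm (a * qpoch k q n1 * qpoch k q n2 * q ^ e / (qpoch q q n3 * qpoch q q n4))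
          \<le> Cst k q * norm q ^ e"
proof -
  let ?K = "exp (norm k / (1 - norm q))"
  have l3: "qlow q \<le> norm (qpoch q q n3)" and l4: "qlow q \<le> norm (qpoch q q n4)"
    using qpoch_lower[OF q] by auto
  have lp: "qlow q > 0" using qlow_pos[OF q] .
  have num: "norm (a * qpoch k q n1 * qpoch k q n2 * q ^ e) \<le> (2 + norm k) * ?K * ?K * norm q ^ e"
    unfolding norm_mult norm_power
    by (intro mult_mono qpoch_bound[OF q] a) (auto intro: mult_nonneg_nonneg)
  have den: "qlow q * qlow q \<le> norm (qpoch q q n3 * qpoch q q n4)"
    unfolding norm_mult using lp l3 l4 by (intro mult_mono) auto
  have "norm (a * qpoch k q n1 * qpoch k q n2 * q ^ e / (qpoch q q n3 * qpoch q q n4))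
      = norm (a * qpoch k q n1 * qpoch k q n2 * q ^ e) / norm (qpoch q q n3 * qpoch q q n4)"
    by (simp add: norm_divide)
  also have "\<dots> \<le> ((2 + norm k) * ?K * ?K * norm q ^ e) / (qlow q * qlow q)"
    by (rule frac_le[OF _ num _ den]) (use lp in auto)
  also have "\<dots> = Cst k q * norm q ^ e"
    by (simp add: Cst_def power2_eq_square)
  finally show ?thesis .
qed

lemma norm_one_minus_le:
  fixes q k :: complex
  assumes "norm q < 1"
  shows "norm (1 - k * q ^ e) \<le> 2 + norm k"
proof -
  have "norm (1 - k * q ^ e) \<le> 1 + norm k * norm q ^ e"
    using norm_triangle_ineq4[of 1 "k * q ^ e"] by (simp add: norm_mult norm_power)
  also have "norm q ^ e \<le> 1" using assms by (simp add: power_le_one)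
  hence "norm k * norm q ^ e \<le> norm k" by (simp add: mult_left_le)
  finally show ?thesis by simp
qed

lemma uu_bound:
  assumes q: "norm q < 1"
  shows "norm (uu k q j n) \<le> Cst k q * norm q ^ (2 * n * j + n ^ 2)"
  unfolding uu_def by (intro frac_bound q norm_one_minus_le)

lemma gg_bound:
  assumes q: "norm q < 1"
  shows "norm (gg k q j m) \<le> Cst k q * norm q ^ (m ^ 2 + 2 * m * j + 2 * m)"
proof -
  have "norm (1 - q ^ (2 * j + 1)) \<le> 1 + norm (q ^ (2 * j + 1))"
    using norm_triangle_ineq4[of 1 "q ^ (2 * j + 1)"] by simp
  moreover have "norm (q ^ (2 * j + 1)) \<le> 1" unfolding norm_power using q by (intro power_le_one) auto
  ultimately have "norm (1 - q ^ (2 * j + 1)) \<le> 2 + norm k" using norm_ge_zero[of k] by linarith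
  thus ?thesis unfolding gg_def by (intro frac_bound q)
qed

lemma pow_le_pow_ge:
  fixes r :: real
  assumes "0 \<le> r" "r \<le> 1" "a \<le> b"
  shows "r ^ b \<le> r ^ a"
  using assms by (simp add: power_decreasing)

lemma nat_aux: "(n::nat) \<le> 2 * n * j + n * n"
proof -
  have "n \<le> n * n" by (cases n) auto
  thus ?thesis by linarith
qed

lemma gg_base:
  assumes q: "norm q < 1"
  shows "uu k q j 0 = gg k q j 0"
proof -
  have nz1: "qpoch q q (2 * j) \<noteq> 0" using qpoch_nz[OF q] .
  have nz2: "1 - q * q ^ (2 * j) \<noteq> 0"
    using one_minus_qpow_nz[OF q, of "Suc (2 * j)"] by simp
  show ?thesis
    unfolding uu_def gg_def using nz1 nz2
    by (simp add: qpoch_Suc field_simps)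
qed

lemma gg_finite:
  assumes q: "norm q < 1"
  shows "(\<Sum>n\<le>m. uu k q j n) - (\<Sum>n<m. uu k q (Suc j) n) = gg k q j m"
proof (induction m)
  case 0
  then show ?case using gg_base[OF q] by simp
next
  case (Suc m)
  then show ?case using gg_step[OF q, of k j m] by (simp add: algebra_simps)
qed

lemma uu_summable:
  assumes q: "norm q < 1"
  shows "summable (\<lambda>n. norm (uu k q j n))"
proof (rule summable_comparison_test[OF _ summable_mult[OF summable_geometric]])
  show "norm (norm q) < 1" using q by simp
  show "\<exists>N. \<forall>n\<ge>N. norm (norm (uu k q j n)) \<le> Cst k q * norm q ^ n"
  proof (intro exI allI impI)
    fix n :: nat
    have "norm (uu k q j n) \<le> Cst k q * norm q ^ (2 * n * j + n ^ 2)" by (rule uu_bound[OF q])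
    also have "\<dots> \<le> Cst k q * norm q ^ n"
      by (intro mult_left_mono pow_le_pow_ge Cst_nonneg q)
         (use q nat_aux[of n j] in \<open>auto simp: power2_eq_square\<close>)
    finally show "norm (norm (uu k q j n)) \<le> Cst k q * norm q ^ n" by simp
  qed
qed

lemma gg_tendsto:
  assumes q: "norm q < 1"
  shows "(\<lambda>m. gg k q j m) \<longlonglongrightarrow> 0"
proof (rule Lim_null_comparison)
  show "\<forall>\<^sub>F m in sequentially. norm (gg k q j m) \<le> Cst k q * norm q ^ m"
  proof (intro always_eventually allI)
    fix m
    have "norm (gg k q j m) \<le> Cst k q * norm q ^ (m ^ 2 + 2 * m * j + 2 * m)" by (rule gg_bound[OF q])
    also have "\<dots> \<le> Cst k q * norm q ^ m"
      by (intro mult_left_mono pow_le_pow_ge Cst_nonneg q) (use q in auto)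
    finally show "norm (gg k q j m) \<le> Cst k q * norm q ^ m" .
  qed
  show "(\<lambda>m. Cst k q * norm q ^ m) \<longlonglongrightarrow> 0"
    using q by (intro tendsto_mult_right_zero LIMSEQ_power_zero) auto
qed

lemma uu_sum_const:
  assumes q: "norm q < 1"
  shows "suminf (uu k q j) = suminf (uu k q 0)"
proof (induction j)
  case (Suc j)
  have s1: "summable (uu k q j)" "summable (uu k q (Suc j))"
    using uu_summable[OF q] summable_norm_cancel by blast+
  have "(\<lambda>m. (\<Sum>n\<le>m. uu k q j n) - (\<Sum>n<m. uu k q (Suc j) n)) \<longlonglongrightarrow> suminf (uu k q j) - suminf (uu k q (Suc j))"
    by (intro tendsto_diff summable_LIMSEQ' summable_LIMSEQ s1)
  moreover have "(\<lambda>m. (\<Sum>n\<le>m. uu k q j n) - (\<Sum>n<m. uu k q (Suc j) n)) \<longlonglongrightarrow> 0"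
    unfolding gg_finite[OF q] by (rule gg_tendsto[OF q])
  ultimately have "suminf (uu k q j) - suminf (uu k q (Suc j)) = 0" by (rule LIMSEQ_unique)
  with Suc show ?case by simp
qed simp


lemma qpoch_shift: "qpoch k q (Suc n) = (1 - k) * qpoch (k * q) q n"
  unfolding qpoch_def by (subst prod.lessThan_Suc_shift) (simp add: mult.assoc)

lemma qpoch_inf_shift:
  assumes q: "norm q < 1"
  shows "qpoch_inf k q = (1 - k) * qpoch_inf (k * q) q"
proof -
  have "(\<lambda>n. qpoch k q (Suc n)) \<longlonglongrightarrow> qpoch_inf k q"
    using qpoch_tendsto[OF q] by (rule LIMSEQ_Suc)
  moreover have "(\<lambda>n. qpoch k q (Suc n)) \<longlonglongrightarrow> (1 - k) * qpoch_inf (k * q) q"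
    unfolding qpoch_shift by (intro tendsto_mult tendsto_const qpoch_tendsto[OF q])
  ultimately show ?thesis by (rule LIMSEQ_unique)
qed

lemma qpoch_inf_qq_nz:
  assumes q: "norm q < 1"
  shows "qpoch_inf q q \<noteq> 0"
proof (rule qpoch_inf_nz[OF q])
  fix i
  show "q * q ^ i \<noteq> 1" using one_minus_qpow_nz[OF q, of "Suc i"] by simp
qed

lemma uu_0_eq: "uu k q j 0 = qpoch k q (Suc (2 * j)) / qpoch q q (2 * j)"
  unfolding uu_def by (simp add: qpoch_Suc mult.commute)

lemma uu_suminf:
  assumes q: "norm q < 1"
  shows "suminf (uu k q 0) = qpoch_inf k q / qpoch_inf q q"
proof -
  define b where "b = (\<lambda>n::nat. if n = 0 then qpoch_inf k q / qpoch_inf q q else 0)"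
  have lim: "(\<lambda>j. uu k q j n) \<longlonglongrightarrow> b n" for n
  proof (cases "n = 0")
    case True
    have sm1: "strict_mono (\<lambda>j::nat. Suc (2 * j))" by (rule strict_monoI) simp
    have sm2: "strict_mono (\<lambda>j::nat. 2 * j)" by (rule strict_monoI) simp
    have "(\<lambda>j. qpoch k q (Suc (2 * j))) \<longlonglongrightarrow> qpoch_inf k q"
      using LIMSEQ_subseq_LIMSEQ[OF qpoch_tendsto[OF q] sm1] by (simp add: o_def)
    moreover have "(\<lambda>j. qpoch q q (2 * j)) \<longlonglongrightarrow> qpoch_inf q q"
      using LIMSEQ_subseq_LIMSEQ[OF qpoch_tendsto[OF q] sm2] by (simp add: o_def)
    ultimately have "(\<lambda>j. qpoch k q (Suc (2 * j)) / qpoch q q (2 * j)) \<longlonglongrightarrow> qpoch_inf k q / qpoch_inf q q"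
      by (intro tendsto_divide qpoch_inf_qq_nz[OF q])
    thus ?thesis using True by (simp add: uu_0_eq b_def)
  next
    case False
    have r: "norm q ^ (2 * n) < 1"
      using power_strict_mono[of "norm q" 1 "2 * n"] q False by simp
    have b0: "b n = 0" using False by (simp add: b_def)
    show ?thesis unfolding b0
    proof (rule Lim_null_comparison)
      show "\<forall>\<^sub>F j in sequentially. norm (uu k q j n) \<le> Cst k q * (norm q ^ (2 * n)) ^ j"
      proof (intro always_eventually allI)
        fix j
        have "norm (uu k q j n) \<le> Cst k q * norm q ^ (2 * n * j + n ^ 2)" by (rule uu_bound[OF q])
        also have "\<dots> \<le> Cst k q * norm q ^ (2 * n * j)"
          by (intro mult_left_mono pow_le_pow_ge Cst_nonneg q) (use q in auto)
        also have "\<dots> = Cst k q * (norm q ^ (2 * n)) ^ j" by (simp add: power_mult)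
        finally show "norm (uu k q j n) \<le> Cst k q * (norm q ^ (2 * n)) ^ j" .
      qed
      show "(\<lambda>j. Cst k q * (norm q ^ (2 * n)) ^ j) \<longlonglongrightarrow> 0"
        using r by (intro tendsto_mult_right_zero LIMSEQ_power_zero) auto
    qed
  qed
  have bound: "\<forall>\<^sub>F (n, j) in at_top \<times>\<^sub>F sequentially. norm (uu k q j n) \<le> Cst k q * norm q ^ n"
  proof (intro always_eventually allI, clarify)
    fix n j :: nat
    have "norm (uu k q j n) \<le> Cst k q * norm q ^ (2 * n * j + n ^ 2)" by (rule uu_bound[OF q])
    also have "\<dots> \<le> Cst k q * norm q ^ n"
      by (intro mult_left_mono pow_le_pow_ge Cst_nonneg q) (use q nat_aux[of n j] in \<open>auto simp: power2_eq_square\<close>)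
    finally show "norm (uu k q j n) \<le> Cst k q * norm q ^ n" .
  qed
  have summ: "summable (\<lambda>n. Cst k q * norm q ^ n)"
    using q by (intro summable_mult summable_geometric) auto
  have "(\<lambda>j. suminf (\<lambda>n. uu k q j n)) \<longlonglongrightarrow> suminf b"
    using tannerys_theorem[of "\<lambda>n j. uu k q j n" b sequentially, OF lim bound summ] by simp
  moreover have "(\<lambda>j. suminf (\<lambda>n. uu k q j n)) = (\<lambda>j. suminf (uu k q 0))"
    using uu_sum_const[OF q] by (simp add: fun_eq_iff)
  ultimately have "suminf (uu k q 0) = suminf b"
    using LIMSEQ_unique tendsto_const by metis
  also have "suminf b = qpoch_inf k q / qpoch_inf q q"
  proof -
    have "b sums (qpoch_inf k q / qpoch_inf q q)"
      using sums_single[of 0 "\<lambda>_. qpoch_inf k q / qpoch_inf q q"] by (simp add: b_def)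
    thus ?thesis by (rule sums_unique[symmetric])
  qed
  finally show ?thesis .
qed

lemma G_identity:
  assumes q: "norm q < 1" and k: "k \<noteq> 1"
  shows "(\<lambda>n. uu k q j n / (1 - k)) sums (qpoch_inf (k * q) q / qpoch_inf q q)"
proof -
  have s: "summable (uu k q j)" using uu_summable[OF q] summable_norm_cancel by blast
  have "uu k q j sums (qpoch_inf k q / qpoch_inf q q)"
    using summable_sums[OF s] uu_sum_const[OF q, of k j] uu_suminf[OF q, of k] by simp
  hence "(\<lambda>n. uu k q j n / (1 - k)) sums (qpoch_inf k q / qpoch_inf q q / (1 - k))"
    by (rule sums_divide)
  moreover have "qpoch_inf k q / qpoch_inf q q / (1 - k) = qpoch_inf (k * q) q / qpoch_inf q q"
  proof -
    have "1 - k \<noteq> 0" using k by simp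
    thus ?thesis unfolding qpoch_inf_shift[OF q, of k] by simp
  qed
  ultimately show ?thesis by simp
qed


definition rq :: "complex \<Rightarrow> int \<Rightarrow> complex" where
  "rq x n = (if n < 0 then 0 else inverse (qpoch (x^2) (x^2) (nat n)))"

definition cc :: "complex \<Rightarrow> nat \<Rightarrow> int \<Rightarrow> complex" where
  "cc x N j = (-1) powi j * x powi (j * j) * qpoch (x^2) (x^2) (2 * N) * rq x (int N - j) * rq x (int N + j)"

lemma rq_step:
  assumes x: "norm x < 1" "x \<noteq> 0"
  shows "rq x n = (1 - x powi (2 * (n + 1))) * rq x (n + 1)"
proof -
  have Q: "norm (x^2) < 1" using x by (simp add: norm_power power_less_one_iff)
  consider "n < -1" | "n = -1" | "n \<ge> 0" by linarith
  then show ?thesis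
  proof cases
    case 1 then show ?thesis by (simp add: rq_def)
  next
    case 2 then show ?thesis by (simp add: rq_def)
  next
    case 3
    then obtain m where m: "n = int m" by (metis nonneg_eq_int)
    have nz: "qpoch (x^2) (x^2) (Suc m) \<noteq> 0" by (rule qpoch_nz[OF Q])
    have e0: "x powi (2 * (int m + 1)) = x ^ 2 * (x ^ 2) ^ m"
    proof -
      have "2 * (int m + 1) = int (2 * Suc m)" by simp
      hence "x powi (2 * (int m + 1)) = x ^ (2 * Suc m)" by (simp only: power_int_of_nat)
      also have "\<dots> = x ^ 2 * (x ^ 2) ^ m" by (simp add: power_mult[symmetric] power_add[symmetric])
      finally show ?thesis .
    qed
    have e: "x powi (2 * (n + 1)) = x ^ 2 * (x ^ 2) ^ m" using e0 m by simp
    have nz1: "qpoch (x^2) (x^2) m \<noteq> 0" by (rule qpoch_nz[OF Q])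
    have nz2: "1 - x ^ 2 * (x ^ 2) ^ m \<noteq> 0"
      using nz unfolding qpoch_Suc by auto
    have "nat (int m + 1) = Suc m" by simp
    hence A: "rq x (n + 1) = inverse (qpoch (x^2) (x^2) m * (1 - x ^ 2 * (x ^ 2) ^ m))"
      using m by (simp add: rq_def qpoch_Suc)
    have B: "rq x n = inverse (qpoch (x^2) (x^2) m)" using m by (simp add: rq_def)
    show ?thesis unfolding A B e using nz1 nz2 by (simp add: inverse_mult_distrib)
  qed
qed

lemma powi_add_nat:
  fixes x :: complex
  assumes "x \<noteq> 0"
  shows "x powi (int a + b) = x ^ a * x powi b"
  using assms by (simp add: power_int_add)

lemma powi_diff_nat:
  fixes x :: complex
  assumes "x \<noteq> 0"
  shows "x powi (int a - b) = x ^ a / x powi b"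
  using assms by (simp add: power_int_diff)

lemma combine_aux:
  fixes S P R a b c d e y w1 w2 :: complex
  assumes "a * b = (1 + y^2) * c + y * w1 * d + y * w2 * e"
  shows "S * (P * a * b) * R = (1 + y^2) * (S * P * c * R) - y * (-(S * w1) * P * d * R) - y * (-(S * w2) * P * e * R)"
proof -
  have "S * (P * a * b) * R = S * P * R * (a * b)" by (simp add: mult_ac)
  also have "\<dots> = S * P * R * ((1 + y^2) * c + y * w1 * d + y * w2 * e)" using assms by simp
  finally show ?thesis by (simp add: algebra_simps)
qed

lemma cc_rec:
  assumes x: "norm x < 1" "x \<noteq> 0"
  shows "cc x (Suc N) j = (1 + (x ^ (2 * N + 1)) ^ 2) * cc x N j
           - x ^ (2 * N + 1) * cc x N (j - 1) - x ^ (2 * N + 1) * cc x N (j + 1)"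
proof -
  define U where "U = x ^ (2 * N)"
  define T where "T = x powi (2 * j)"
  define S where "S = (-1) powi j * x powi (j * j)"
  define P where "P = qpoch (x^2) (x^2) (2 * N)"
  define R where "R = rq x (int (Suc N) - j) * rq x (int (Suc N) + j)"
  have T0: "T \<noteq> 0" using x by (simp add: T_def)
  have p1: "x powi (2 * (int N - j + 1)) = U * x ^ 2 / T"
  proof -
    have "2 * (int N - j + 1) = int (2 * N + 2) - 2 * j" by simp
    thus ?thesis by (subst \<open>2 * (int N - j + 1) = int (2 * N + 2) - 2 * j\<close>, subst powi_diff_nat[OF x(2)])
      (simp add: U_def T_def power_add power2_eq_square)
  qed
  have p2: "x powi (2 * (int N + j + 1)) = U * T * x ^ 2"
  proof -
    have "2 * (int N + j + 1) = int (2 * N + 2) + 2 * j" by simp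
    thus ?thesis by (subst \<open>2 * (int N + j + 1) = int (2 * N + 2) + 2 * j\<close>, subst powi_add_nat[OF x(2)])
      (simp add: U_def T_def power_add power2_eq_square)
  qed
  have p3: "x powi (2 * (int N + (j - 1) + 1)) = U * T"
  proof -
    have "2 * (int N + (j - 1) + 1) = int (2 * N) + 2 * j" by simp
    thus ?thesis by (subst \<open>2 * (int N + (j - 1) + 1) = int (2 * N) + 2 * j\<close>, subst powi_add_nat[OF x(2)])
      (simp add: U_def T_def)
  qed
  have p4: "x powi (2 * (int N - (j + 1) + 1)) = U / T"
  proof -
    have "2 * (int N - (j + 1) + 1) = int (2 * N) - 2 * j" by simp
    thus ?thesis by (subst \<open>2 * (int N - (j + 1) + 1) = int (2 * N) - 2 * j\<close>, subst powi_diff_nat[OF x(2)])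
      (simp add: U_def T_def)
  qed
  have r1: "rq x (int N - j) = (1 - U * x ^ 2 / T) * rq x (int (Suc N) - j)"
    using rq_step[OF x, of "int N - j"] p1 by (simp add: algebra_simps)
  have r2: "rq x (int N + j) = (1 - U * T * x ^ 2) * rq x (int (Suc N) + j)"
    using rq_step[OF x, of "int N + j"] p2 by (simp add: algebra_simps)
  have r3: "rq x (int N + (j - 1)) = (1 - U * T) * (1 - U * T * x ^ 2) * rq x (int (Suc N) + j)"
  proof -
    have "rq x (int N + (j - 1)) = (1 - U * T) * rq x (int N + j)"
      using rq_step[OF x, of "int N + (j - 1)"] p3 by (simp add: algebra_simps)
    thus ?thesis using r2 by simp
  qed
  have r4: "rq x (int N - (j + 1)) = (1 - U / T) * (1 - U * x ^ 2 / T) * rq x (int (Suc N) - j)"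
  proof -
    have "rq x (int N - (j + 1)) = (1 - U / T) * rq x (int N - j)"
      using rq_step[OF x, of "int N - (j + 1)"] p4 by (simp add: algebra_simps)
    thus ?thesis using r1 by simp
  qed
  have r5: "rq x (int N - (j - 1)) = rq x (int (Suc N) - j)" by (simp add: algebra_simps)
  have r6: "rq x (int N + (j + 1)) = rq x (int (Suc N) + j)" by (simp add: algebra_simps)
  have s1: "(-1) powi (j - 1) * x powi ((j - 1) * (j - 1)) = - (S * (x / T))"
  proof -
    have h: "(j - 1) * (j - 1) = (j * j + 1) - 2 * j" by (simp add: algebra_simps)
    have "x powi ((j - 1) * (j - 1)) = x powi (j * j) * x / T"
      unfolding h T_def using x by (simp add: power_int_diff power_int_add)
    moreover have "(-1::complex) powi (j - 1) = - ((-1) powi j)"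
      by (simp add: power_int_diff)
    ultimately show ?thesis by (simp add: S_def)
  qed
  have s2: "(-1) powi (j + 1) * x powi ((j + 1) * (j + 1)) = - (S * (x * T))"
  proof -
    have h: "(j + 1) * (j + 1) = (j * j + 1) + 2 * j" by (simp add: algebra_simps)
    have "x powi ((j + 1) * (j + 1)) = x powi (j * j) * x * T"
      unfolding h T_def using x by (simp add: power_int_add)
    moreover have "(-1::complex) powi (j + 1) = - ((-1) powi j)"
      by (simp add: power_int_add)
    ultimately show ?thesis by (simp add: S_def)
  qed
  have P2: "qpoch (x^2) (x^2) (2 * Suc N) = P * (1 - U^2 * x^2) * (1 - U^2 * x^2 * x^2)"
  proof -
    have h: "2 * Suc N = Suc (Suc (2 * N))" by simp
    have e: "x ^ 2 * (x ^ 2) ^ (2 * N) = U^2 * x^2"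
    proof -
      have "x ^ 2 * (x ^ 2) ^ (2 * N) = x ^ (2 + 2 * (2 * N))" by (simp only: power_mult[symmetric] power_add[symmetric])
      also have "\<dots> = x ^ (2 * N * 2 + 2)" by (rule arg_cong[where f="\<lambda>n. x ^ n"]) simp
      also have "\<dots> = U^2 * x^2" by (simp only: U_def power_mult power_add)
      finally show ?thesis .
    qed
    show ?thesis unfolding h qpoch_Suc2 e P_def ..
  qed
  have y: "x ^ (2 * N + 1) = U * x" by (simp add: U_def)
  have f0: "cc x (Suc N) j = S * (P * (1 - U^2 * x^2) * (1 - U^2 * x^2 * x^2)) * R"
    unfolding cc_def P2 S_def R_def by (simp add: mult_ac)
  have f1: "cc x N j = S * P * ((1 - U * x ^ 2 / T) * (1 - U * T * x ^ 2)) * R"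
    unfolding cc_def r1 r2 S_def R_def P_def by (simp add: mult_ac)
  have f2: "cc x N (j - 1) = - (S * (x / T)) * P * ((1 - U * T) * (1 - U * T * x ^ 2)) * R"
    unfolding cc_def r3 r5 s1[symmetric] R_def P_def by (simp add: mult_ac)
  have f3: "cc x N (j + 1) = - (S * (x * T)) * P * ((1 - U / T) * (1 - U * x ^ 2 / T)) * R"
    unfolding cc_def r4 r6 s2[symmetric] R_def P_def by (simp add: mult_ac)
  have core: "(1 - U^2 * x^2) * (1 - U^2 * x^2 * x^2) = (1 + (U * x)^2) * ((1 - U * x ^ 2 / T) * (1 - U * T * x ^ 2))
     + U * x * (x / T) * ((1 - U * T) * (1 - U * T * x ^ 2))
     + U * x * (x * T) * ((1 - U / T) * (1 - U * x ^ 2 / T))"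
    using T0 by (simp add: field_simps) algebra
  show ?thesis unfolding f0 f1 f2 f3 y
    by (rule combine_aux[OF core])
qed


lemma sum_shift_int: "(\<Sum>j\<in>{a..b}. f (j + c)) = (\<Sum>j\<in>{a + c..b + c}. f j)" for a b c :: int
proof -
  have "(\<Sum>j\<in>{a + c..b + c}. f j) = (\<Sum>j\<in>(\<lambda>j. j + c) ` {a..b}. f j)" by simp
  also have "\<dots> = (\<Sum>j\<in>{a..b}. f (j + c))" by (subst sum.reindex) (auto simp: inj_on_def)
  finally show ?thesis by simp
qed

lemma sum_supp:
  fixes f :: "int \<Rightarrow> complex"
  assumes "\<And>j. j < a \<or> j > b \<Longrightarrow> f j = 0" "c \<le> a" "b \<le> d"
  shows "sum f {c..d} = sum f {a..b}"
  by (rule sum.mono_neutral_right) (use assms in auto)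

lemma cc_zero:
  assumes "j < - int N \<or> j > int N"
  shows "cc x N j = 0"
  using assms by (auto simp: cc_def rq_def)

lemma rq_0 [simp]: "rq x 0 = 1" by (simp add: rq_def)

definition LL :: "complex \<Rightarrow> complex \<Rightarrow> nat \<Rightarrow> complex" where
  "LL x z N = (\<Sum>j\<in>{- int N..int N}. cc x N j * z powi j)"

lemma LL_step:
  assumes x: "norm x < 1" "x \<noteq> 0" and z: "z \<noteq> 0"
  shows "LL x z (Suc N) = LL x z N * ((1 + (x ^ (2 * N + 1))^2) - x ^ (2 * N + 1) * z - x ^ (2 * N + 1) * inverse z)"
proof -
  define y where "y = x ^ (2 * N + 1)"
  define I where "I = {- int (Suc N)..int (Suc N)}"
  have "LL x z (Suc N) = (\<Sum>j\<in>I. ((1 + y^2) * cc x N j - y * cc x N (j - 1) - y * cc x N (j + 1)) * z powi j)"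
    unfolding LL_def I_def y_def using cc_rec[OF x] by simp
  also have "\<dots> = (1 + y^2) * (\<Sum>j\<in>I. cc x N j * z powi j) - y * (\<Sum>j\<in>I. cc x N (j - 1) * z powi j)
       - y * (\<Sum>j\<in>I. cc x N (j + 1) * z powi j)"
    by (simp add: algebra_simps sum.distrib sum_subtractf sum_distrib_left)
  also have "(\<Sum>j\<in>I. cc x N j * z powi j) = LL x z N"
    unfolding I_def LL_def by (rule sum_supp) (auto simp: cc_zero)
  also have "(\<Sum>j\<in>I. cc x N (j - 1) * z powi j) = z * LL x z N"
  proof -
    have "(\<Sum>j\<in>I. cc x N (j - 1) * z powi j) = (\<Sum>j\<in>I. (\<lambda>i. cc x N i * z powi (i + 1)) (j + (-1)))"
      by simp
    also have "\<dots> = (\<Sum>i\<in>{- int (Suc N) + (-1)..int (Suc N) + (-1)}. cc x N i * z powi (i + 1))"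
      unfolding I_def by (rule sum_shift_int)
    also have "\<dots> = (\<Sum>i\<in>{- int N..int N}. cc x N i * z powi (i + 1))"
      by (rule sum_supp) (auto simp: cc_zero)
    also have "\<dots> = z * LL x z N"
      unfolding LL_def sum_distrib_left using z by (intro sum.cong) (auto simp: power_int_add)
    finally show ?thesis .
  qed
  also have "(\<Sum>j\<in>I. cc x N (j + 1) * z powi j) = inverse z * LL x z N"
  proof -
    have "(\<Sum>j\<in>I. cc x N (j + 1) * z powi j) = (\<Sum>j\<in>I. (\<lambda>i. cc x N i * z powi (i - 1)) (j + 1))"
      by simp
    also have "\<dots> = (\<Sum>i\<in>{- int (Suc N) + 1..int (Suc N) + 1}. cc x N i * z powi (i - 1))"
      unfolding I_def by (rule sum_shift_int)
    also have "\<dots> = (\<Sum>i\<in>{- int N..int N}. cc x N i * z powi (i - 1))"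
      by (rule sum_supp) (auto simp: cc_zero)
    also have "\<dots> = inverse z * LL x z N"
      unfolding LL_def sum_distrib_left using z by (intro sum.cong) (auto simp: power_int_diff field_simps)
    finally show ?thesis .
  qed
  finally show ?thesis unfolding y_def by (simp add: algebra_simps)
qed

lemma LL_0: "LL x z 0 = 1"
  by (simp add: LL_def cc_def)

lemma finite_jtp:
  assumes x: "norm x < 1" "x \<noteq> 0" and z: "z \<noteq> 0"
  shows "qpoch (x * z) (x^2) N * qpoch (x / z) (x^2) N = LL x z N"
proof (induction N)
  case 0 show ?case by (simp add: LL_0)
next
  case (Suc N)
  have "qpoch (x * z) (x^2) (Suc N) * qpoch (x / z) (x^2) (Suc N)
      = (qpoch (x * z) (x^2) N * qpoch (x / z) (x^2) N) * ((1 - x * z * (x^2)^N) * (1 - x / z * (x^2)^N))"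
    by (simp add: qpoch_Suc mult_ac)
  also have "(1 - x * z * (x^2)^N) * (1 - x / z * (x^2)^N)
      = (1 + (x ^ (2 * N + 1))^2) - x ^ (2 * N + 1) * z - x ^ (2 * N + 1) * inverse z"
  proof -
    have e: "x * (x^2)^N = x ^ (2 * N + 1)" by (simp add: power_mult[symmetric] mult.commute)
    have "(1 - x * z * (x^2)^N) * (1 - x / z * (x^2)^N) = (1 - (x * (x^2)^N) * z) * (1 - (x * (x^2)^N) * inverse z)"
      by (simp add: field_simps)
    also have "\<dots> = (1 + (x * (x^2)^N)^2) - (x * (x^2)^N) * z - (x * (x^2)^N) * inverse z"
      using z by (simp add: field_simps power2_eq_square)
    finally show ?thesis unfolding e .
  qed
  finally show ?case using Suc LL_step[OF x z, of N] by simp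
qed


lemma cc_sym: "cc x N (- j) = cc x N j"
  by (simp add: cc_def power_int_minus_one_minus mult_ac)

lemma sum_sym_int:
  fixes f :: "int \<Rightarrow> complex"
  shows "(\<Sum>j\<in>{- int N..int N}. f j) + f 0 = (\<Sum>m\<le>N. f (int m) + f (- int m))"
proof (induction N)
  case 0 then show ?case by simp
next
  case (Suc N)
  have eq: "{- int (Suc N)..int (Suc N)} = insert (int (Suc N)) (insert (- int (Suc N)) {- int N..int N})"
    by auto
  have "(\<Sum>j\<in>{- int (Suc N)..int (Suc N)}. f j) = f (int (Suc N)) + (f (- int (Suc N)) + (\<Sum>j\<in>{- int N..int N}. f j))"
    unfolding eq by (subst sum.insert; simp)+
  hence "(\<Sum>j\<in>{- int (Suc N)..int (Suc N)}. f j) + f 0 = f (int (Suc N)) + f (- int (Suc N)) + ((\<Sum>j\<in>{- int N..int N}. f j) + f 0)"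
    by (simp only: add_ac)
  also have "\<dots> = (\<Sum>m\<le>Suc N. f (int m) + f (- int m))"
    unfolding Suc.IH sum.atMost_Suc by (simp only: add_ac)
  finally show ?case .
qed

definition aa :: "complex \<Rightarrow> complex \<Rightarrow> nat \<Rightarrow> nat \<Rightarrow> complex" where
  "aa x z m N = (-1) ^ m * x ^ (m * m) * (z ^ m + inverse z ^ m) * rq x (int N - int m) * rq x (int N + int m)"

lemma cc_aa: "cc x N (int m) * z ^ m + cc x N (- int m) * z powi (- int m) = qpoch (x^2) (x^2) (2 * N) * aa x z m N"
proof -
  have "x powi (int m * int m) = x ^ (m * m)" by (simp flip: of_nat_mult)
  moreover have "(-1::complex) powi int m = (-1) ^ m" by simp
  ultimately show ?thesis unfolding cc_sym by (simp add: cc_def aa_def power_int_minus algebra_simps power_inverse)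
qed

lemma aa_sum:
  assumes x: "norm x < 1" "x \<noteq> 0" and z: "z \<noteq> 0"
  shows "(\<Sum>m\<le>N. aa x z m N) = qpoch (x * z) (x^2) N * qpoch (x / z) (x^2) N / qpoch (x^2) (x^2) (2 * N)
           + rq x (int N) ^ 2"
proof -
  have Q: "norm (x^2) < 1" using x by (simp add: norm_power power_less_one_iff)
  have nz: "qpoch (x^2) (x^2) (2 * N) \<noteq> 0" by (rule qpoch_nz[OF Q])
  have "LL x z N + cc x N 0 = qpoch (x^2) (x^2) (2 * N) * (\<Sum>m\<le>N. aa x z m N)"
    unfolding LL_def using sum_sym_int[of "\<lambda>j. cc x N j * z powi j" N]
    by (simp add: cc_aa sum_distrib_left)
  moreover have "cc x N 0 = qpoch (x^2) (x^2) (2 * N) * rq x (int N) ^ 2"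
    by (simp add: cc_def power2_eq_square)
  ultimately show ?thesis using nz finite_jtp[OF x z, of N]
    by (simp add: field_simps)
qed

lemma aa_zero: "m > N \<Longrightarrow> aa x z m N = 0"
  by (simp add: aa_def rq_def)

lemma aa_suminf:
  assumes x: "norm x < 1" "x \<noteq> 0" and z: "z \<noteq> 0"
  shows "(\<lambda>m. aa x z m N) sums (qpoch (x * z) (x^2) N * qpoch (x / z) (x^2) N / qpoch (x^2) (x^2) (2 * N)
           + rq x (int N) ^ 2)"
  unfolding aa_sum[OF x z, symmetric]
  by (rule sums_finite) (use aa_zero in auto)


lemma rq_nat: "rq x (int n) = inverse (qpoch (x^2) (x^2) n)"
  by (simp add: rq_def)

lemma rq_norm_le:
  assumes x: "norm x < 1"
  shows "norm (rq x n) \<le> 1 / qlow (x^2)"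
proof -
  have Q: "norm (x^2) < 1" using x by (simp add: norm_power power_less_one_iff)
  have lp: "qlow (x^2) > 0" by (rule qlow_pos[OF Q])
  show ?thesis
  proof (cases "n < 0")
    case True then show ?thesis using lp by (simp add: rq_def)
  next
    case False
    have "norm (rq x n) = 1 / norm (qpoch (x^2) (x^2) (nat n))"
      using False by (simp add: rq_def norm_inverse divide_inverse)
    also have "\<dots> \<le> 1 / qlow (x^2)"
      using qpoch_lower[OF Q, of "nat n"] lp by (intro divide_left_mono) (auto intro!: mult_pos_pos)
    finally show ?thesis .
  qed
qed

lemma summable_theta_aux:
  fixes r s :: real
  assumes "0 \<le> r" "r < 1" "0 \<le> s"
  shows "summable (\<lambda>m. r ^ (m * m) * s ^ m)"
proof -
  have "(\<lambda>m. r ^ m * s) \<longlonglongrightarrow> 0 * s"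
    using assms by (intro tendsto_mult LIMSEQ_power_zero tendsto_const) auto
  hence "eventually (\<lambda>m. r ^ m * s < 1/2) sequentially"
    by (intro order_tendstoD) auto
  then obtain M where M: "\<And>m. m \<ge> M \<Longrightarrow> r ^ m * s < 1/2"
    by (auto simp: eventually_at_top_linorder)
  show ?thesis
  proof (rule summable_comparison_test')
    show "summable (\<lambda>m. (1/2::real) ^ m)" by (rule summable_geometric) simp
    fix m assume "m \<ge> M"
    have "norm (r ^ (m * m) * s ^ m) = (r ^ m * s) ^ m"
      using assms by (simp add: power_mult power_mult_distrib abs_mult)
    also have "\<dots> \<le> (1/2) ^ m"
      using M[OF \<open>m \<ge> M\<close>] assms by (intro power_mono) auto
    finally show "norm (r ^ (m * m) * s ^ m) \<le> (1/2) ^ m" .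
  qed
qed

lemma jtp:
  fixes x z :: complex
  assumes x: "norm x < 1" "x \<noteq> 0" and z: "z \<noteq> 0"
  shows "summable (\<lambda>m. norm ((-1) ^ m * x ^ (m * m) * (z ^ m + inverse z ^ m)))"
    and "(\<lambda>m. (-1) ^ m * x ^ (m * m) * (z ^ m + inverse z ^ m)) sums
           (qpoch_inf (x * z) (x^2) * qpoch_inf (x / z) (x^2) * qpoch_inf (x^2) (x^2) + 1)"
proof -
  define Q where "Q = x^2"
  have Q: "norm Q < 1" using x by (simp add: Q_def norm_power power_less_one_iff)
  define Qi where "Qi = qpoch_inf Q Q"
  have Qi: "Qi \<noteq> 0" unfolding Qi_def by (rule qpoch_inf_qq_nz[OF Q])
  define w where "w = (\<lambda>m. (-1) ^ m * x ^ (m * m) * (z ^ m + inverse z ^ m))"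
  define b where "b = (\<lambda>m. w m * (inverse Qi * inverse Qi))"
  have lim: "(\<lambda>N. aa x z m N) \<longlonglongrightarrow> b m" for m
  proof (rule LIMSEQ_offset[where k = m])
    have eq: "aa x z m (N + m) = w m * inverse (qpoch Q Q N) * inverse (qpoch Q Q (N + 2 * m))" for N
    proof -
      have h1: "int (N + m) - int m = int N" and h2: "int (N + m) + int m = int (N + 2 * m)" by simp_all
      show ?thesis unfolding aa_def w_def Q_def h1 h2 rq_nat by simp
    qed
    have t1: "(\<lambda>N. qpoch Q Q N) \<longlonglongrightarrow> Qi" unfolding Qi_def by (rule qpoch_tendsto[OF Q])
    have t2: "(\<lambda>N. qpoch Q Q (N + 2 * m)) \<longlonglongrightarrow> Qi"
      using LIMSEQ_ignore_initial_segment[OF t1, of "2 * m"] .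
    have "(\<lambda>N. w m * inverse (qpoch Q Q N) * inverse (qpoch Q Q (N + 2 * m))) \<longlonglongrightarrow> w m * inverse Qi * inverse Qi"
      using Qi by (intro tendsto_mult tendsto_const tendsto_inverse t1 t2) auto
    thus "(\<lambda>N. aa x z m (N + m)) \<longlonglongrightarrow> b m"
      unfolding eq b_def by (simp add: mult.assoc)
  qed
  define M where "M = (\<lambda>m. (norm x ^ (m * m) * norm z ^ m + norm x ^ (m * m) * norm (inverse z) ^ m) * (1 / qlow Q) ^ 2)"
  have bound: "\<forall>\<^sub>F (m, N) in at_top \<times>\<^sub>F sequentially. norm (aa x z m N) \<le> M m"
  proof (intro always_eventually allI, clarify)
    fix m N :: nat
    have r1: "norm (rq x (int N - int m)) \<le> 1 / qlow Q" and r2: "norm (rq x (int N + int m)) \<le> 1 / qlow Q"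
      using rq_norm_le[OF x(1)] by (auto simp: Q_def)
    have "norm (aa x z m N) = norm x ^ (m * m) * norm (z ^ m + inverse z ^ m) * norm (rq x (int N - int m)) * norm (rq x (int N + int m))"
      by (simp add: aa_def norm_mult norm_power)
    also have "\<dots> \<le> norm x ^ (m * m) * (norm z ^ m + norm (inverse z) ^ m) * (1 / qlow Q) * (1 / qlow Q)"
      using qlow_pos[OF Q]
      by (intro mult_mono r1 r2 mult_left_mono order_trans[OF norm_triangle_ineq]) (auto simp: norm_power)
    also have "\<dots> = M m" by (simp add: M_def power2_eq_square algebra_simps)
    finally show "norm (aa x z m N) \<le> M m" .
  qed
  have summM: "summable M"
    unfolding M_def
    by (intro summable_mult2 summable_add summable_theta_aux) (use x in auto)
  note T = tannerys_theorem[of "\<lambda>m N. aa x z m N" b sequentially, OF lim bound summM, simplified]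
  have Ts: "(\<lambda>N. \<Sum>m. aa x z m N) \<longlonglongrightarrow> suminf b" using T by blast
  have Tn: "summable (\<lambda>n. norm (b n))" using T by blast
  have "(\<lambda>N. \<Sum>m. aa x z m N) = (\<lambda>N. qpoch (x * z) Q N * qpoch (x / z) Q N / qpoch Q Q (2 * N) + rq x (int N) ^ 2)"
    using aa_suminf[OF x z] by (simp add: fun_eq_iff sums_iff Q_def)
  moreover have "(\<lambda>N. qpoch (x * z) Q N * qpoch (x / z) Q N / qpoch Q Q (2 * N) + rq x (int N) ^ 2)
      \<longlonglongrightarrow> qpoch_inf (x * z) Q * qpoch_inf (x / z) Q / Qi + inverse Qi ^ 2"
  proof -
    have sm2: "strict_mono (\<lambda>j::nat. 2 * j)" by (rule strict_monoI) simp
    have t3: "(\<lambda>N. qpoch Q Q (2 * N)) \<longlonglongrightarrow> Qi"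
      using LIMSEQ_subseq_LIMSEQ[OF qpoch_tendsto[OF Q] sm2] by (simp add: o_def Qi_def)
    have "rq x (int N) = inverse (qpoch Q Q N)" for N by (simp add: rq_def Q_def)
    hence t4: "(\<lambda>N. rq x (int N)) \<longlonglongrightarrow> inverse Qi"
      using Qi by (simp add: Qi_def) (intro tendsto_inverse qpoch_tendsto[OF Q], auto)
    show ?thesis using Qi
      by (intro tendsto_add tendsto_divide tendsto_mult qpoch_tendsto[OF Q] t3 tendsto_power t4) auto
  qed
  ultimately have sb: "suminf b = qpoch_inf (x * z) Q * qpoch_inf (x / z) Q / Qi + inverse Qi ^ 2"
    using Ts LIMSEQ_unique by metis
  have sumb: "summable b" using Tn summable_norm_cancel by blast
  have wb: "w = (\<lambda>m. b m * (Qi * Qi))" using Qi by (simp add: b_def fun_eq_iff field_simps)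
  hence ws: "w sums (suminf b * (Qi * Qi))"
    using sums_mult2[OF summable_sums[OF sumb]] by simp
  have "suminf b * (Qi * Qi) = qpoch_inf (x * z) Q * qpoch_inf (x / z) Q * Qi + 1"
    unfolding sb using Qi by (simp add: field_simps power2_eq_square)
  with ws show "w sums (qpoch_inf (x * z) (x^2) * qpoch_inf (x / z) (x^2) * qpoch_inf (x^2) (x^2) + 1)"
    by (simp add: Q_def Qi_def)
  have "summable (\<lambda>m. norm (b m) * norm (Qi * Qi))" by (rule summable_mult2[OF Tn])
  moreover have "norm (w m) = norm (b m) * norm (Qi * Qi)" for m
    unfolding wb by (rule norm_mult)
  ultimately show "summable (\<lambda>m. norm (w m))" by simp
qed


lemma qpow_add: "qpow q (a + b) = qpow q a * qpow q b"
  by (simp add: qpow_def distrib_right exp_add)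

lemma qpow_nat_mult: "qpow q (real n * a) = qpow q a ^ n"
proof -
  have "complex_of_real (real n * a) * Ln q = of_nat n * (complex_of_real a * Ln q)" by simp
  thus ?thesis unfolding qpow_def by (simp only: exp_of_nat_mult)
qed

lemma qpow_nat: "q \<noteq> 0 \<Longrightarrow> qpow q (real n) = q ^ n"
  using qpow_nat_mult[of q n 1] by (simp add: qpow_def)

lemma qpow_minus: "qpow q (- a) = inverse (qpow q a)"
  by (simp add: qpow_def exp_minus)

lemma qpow_nz: "qpow q a \<noteq> 0"
  by (simp add: qpow_def)

lemma qpow_norm_lt1:
  assumes "norm q < 1" "q \<noteq> 0" "a > 0"
  shows "norm (qpow q a) < 1"
proof -
  have "ln (norm q) < 0" using assms by simp
  hence "a * ln (norm q) < 0" using assms(3) by (simp add: mult_pos_neg)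
  thus ?thesis using assms(2) by (simp add: qpow_def)
qed

lemma qpoch_five:
  "qpoch q q (5 * N) = qpoch q (q^5) N * qpoch (q^2) (q^5) N * qpoch (q^3) (q^5) N
     * qpoch (q^4) (q^5) N * qpoch (q^5) (q^5) N"
proof (induction N)
  case 0 then show ?case by simp
next
  case (Suc N)
  define X where "X = (q^5)^N"
  have X: "q ^ (5 * N) = X" by (simp add: X_def power_mult)
  have h: "5 * Suc N = Suc (Suc (Suc (Suc (Suc (5 * N)))))" by simp
  show ?case unfolding h qpoch_Suc Suc.IH X_def[symmetric]
    unfolding power_Suc X by algebra
qed


lemma pow_inv_aux:
  fixes B :: complex
  assumes "B \<noteq> 0"
  shows "(1 + (B^2)^j) * inverse B ^ j = B ^ j + inverse B ^ j"
proof -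
  have e1: "(B^2)^j = B^j * B^j" by (simp only: power2_eq_square power_mult_distrib)
  have e2: "inverse B ^ j = inverse (B ^ j)" by (rule power_inverse)
  have "B ^ j \<noteq> 0" using assms by simp
  hence "(B^2)^j * inverse B ^ j = B ^ j" unfolding e1 e2 by (simp add: field_simps)
  thus ?thesis by (simp add: algebra_simps)
qed

lemma qq_five:
  fixes q :: complex
  assumes q: "norm q < 1"
  shows "qpoch_inf q q = qpoch_inf q (q^5) * qpoch_inf (q^2) (q^5) * qpoch_inf (q^3) (q^5)
     * qpoch_inf (q^4) (q^5) * qpoch_inf (q^5) (q^5)"
proof -
  have q5: "norm (q^5) < 1" using q by (simp add: norm_power power_less_one_iff)
  have sm: "strict_mono (\<lambda>N::nat. 5 * N)" by (rule strict_monoI) simp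
  have "(\<lambda>N. qpoch q q (5 * N)) \<longlonglongrightarrow> qpoch_inf q q"
    using LIMSEQ_subseq_LIMSEQ[OF qpoch_tendsto[OF q] sm] by (simp add: o_def)
  moreover have "(\<lambda>N. qpoch q q (5 * N)) \<longlonglongrightarrow> qpoch_inf q (q^5) * qpoch_inf (q^2) (q^5) * qpoch_inf (q^3) (q^5)
     * qpoch_inf (q^4) (q^5) * qpoch_inf (q^5) (q^5)"
    unfolding qpoch_five by (intro tendsto_mult qpoch_tendsto[OF q5])
  ultimately show ?thesis by (rule LIMSEQ_unique)
qed

lemma special_case:
  fixes q k :: complex
  assumes q: "norm q < 1"
  shows "qpoch_inf (k * q) q * qpoch_inf (q^2) (q^5) * qpoch_inf (q^3) (q^5) * qpoch_inf (q^5) (q^5) / qpoch_inf q q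
    = qpoch_inf (k * q) q / (qpoch_inf q (q^5) * qpoch_inf (q^4) (q^5))"
proof -
  have q5: "norm (q^5) < 1" using q by (simp add: norm_power power_less_one_iff)
  have n1: "qpoch_inf q (q^5) \<noteq> 0"
  proof (rule qpoch_inf_nz[OF q5])
    fix i :: nat
    have e: "q * (q^5)^i = q ^ Suc (5 * i)" by (simp add: power_mult)
    have "1 - q ^ Suc (5 * i) \<noteq> 0" by (rule one_minus_qpow_nz[OF q]) simp
    thus "q * (q^5)^i \<noteq> 1" by (metis e eq_iff_diff_eq_0)
  qed
  have n4: "qpoch_inf (q^4) (q^5) \<noteq> 0"
  proof (rule qpoch_inf_nz[OF q5])
    fix i :: nat
    have e: "q^4 * (q^5)^i = q ^ (4 + 5 * i)" by (simp add: power_mult power_add)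
    have "1 - q ^ (4 + 5 * i) \<noteq> 0" by (rule one_minus_qpow_nz[OF q]) simp
    thus "q^4 * (q^5)^i \<noteq> 1" by (metis e eq_iff_diff_eq_0)
  qed
  have nq: "qpoch_inf q q \<noteq> 0" by (rule qpoch_inf_qq_nz[OF q])
  show ?thesis using n1 n4 nq unfolding qq_five[OF q] by (simp add: field_simps)
qed

theorem mainTheorem13:
  fixes s r :: real and q k :: complex
  assumes "s \<in> \<rat>" "s > 0" "r \<in> \<rat>" "norm q < 1" "q \<noteq> 0" "k \<noteq> 1"
  shows "((\<lambda>(j, n). (1 - k * q ^ (2 * n + 2 * j)) * (1 + qpow q (2 * r * real j))
            * qpoch k q n * qpoch k q (n + 2 * j)
            * qpow q (s * real j ^ 2 - real j * r + 2 * real n * real j + real n ^ 2) * (-1) ^ j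
            / ((1 - k) * qpoch q q n * qpoch q q (n + 2 * j)))
         has_sum
           (qpoch_inf (k * q) q * qpoch_inf (qpow q (s - r)) (qpow q (2 * s))
              * qpoch_inf (qpow q (s + r)) (qpow q (2 * s)) * qpoch_inf (qpow q (2 * s)) (qpow q (2 * s))
              / qpoch_inf q q
            + qpoch_inf (k * q) q / qpoch_inf q q)) UNIV
       \<and> (s = 5 / 2 \<and> r = 1 / 2 \<longrightarrow>
           qpoch_inf (k * q) q * qpoch_inf (qpow q (s - r)) (qpow q (2 * s))
              * qpoch_inf (qpow q (s + r)) (qpow q (2 * s)) * qpoch_inf (qpow q (2 * s)) (qpow q (2 * s))
              / qpoch_inf q q
            + qpoch_inf (k * q) q / qpoch_inf q q
           = qpoch_inf (k * q) q / (qpoch_inf q (q ^ 5) * qpoch_inf (q ^ 4) (q ^ 5))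
            + qpoch_inf (k * q) q / qpoch_inf q q)"
proof -
  have q: "norm q < 1" and q0: "q \<noteq> 0" and k: "k \<noteq> 1" and s: "s > 0" using assms by auto
  have k1: "1 - k \<noteq> 0" using k by simp
  define A where "A = qpow q s"
  define B where "B = qpow q r"
  have A1: "norm A < 1" unfolding A_def by (rule qpow_norm_lt1[OF q q0 s])
  have A0: "A \<noteq> 0" and B0: "B \<noteq> 0" by (simp_all add: A_def B_def qpow_nz)
  have e_sr: "qpow q (s - r) = A / B"
    using qpow_add[of q s "- r"] by (simp add: A_def B_def qpow_minus divide_inverse)
  have e_spr: "qpow q (s + r) = A * B" by (simp add: A_def B_def qpow_add)
  have e_2s: "qpow q (2 * s) = A ^ 2"
    using qpow_nat_mult[of q 2 s] by (simp add: A_def)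
  define L where "L = qpoch_inf (k * q) q / qpoch_inf q q"
  define \<theta> where "\<theta> = qpoch_inf (qpow q (s - r)) (qpow q (2 * s))
              * qpoch_inf (qpow q (s + r)) (qpow q (2 * s)) * qpoch_inf (qpow q (2 * s)) (qpow q (2 * s))"
  define W where "W = (\<lambda>j::nat. (-1) ^ j * A ^ (j * j) * (B ^ j + inverse B ^ j))"
  define V where "V = (\<lambda>j n. uu k q j n / (1 - k))"
  have Wsum: "W sums (\<theta> + 1)" and Wnorm: "summable (\<lambda>j. norm (W j))"
  proof -
    have "\<theta> = qpoch_inf (A * B) (A^2) * qpoch_inf (A / B) (A^2) * qpoch_inf (A^2) (A^2)"
      unfolding \<theta>_def e_sr e_spr e_2s by (simp add: mult_ac)
    thus "W sums (\<theta> + 1)" using jtp(2)[OF A1 A0 B0] by (simp add: W_def)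
    show "summable (\<lambda>j. norm (W j))" using jtp(1)[OF A1 A0 B0] by (simp add: W_def)
  qed
  have Vsum: "V j sums L" for j
    using G_identity[OF q k, of j] by (simp add: V_def L_def)
  define c where "c = Cst k q / norm (1 - k)"
  have c0: "c \<ge> 0" unfolding c_def using Cst_nonneg[OF q] by simp
  have Vbound: "norm (V j n) \<le> c * norm q ^ n" for j n
  proof -
    have "norm (uu k q j n) \<le> Cst k q * norm q ^ (2 * n * j + n ^ 2)" by (rule uu_bound[OF q])
    also have "\<dots> \<le> Cst k q * norm q ^ n"
      by (intro mult_left_mono pow_le_pow_ge Cst_nonneg q) (use q nat_aux[of n j] in \<open>auto simp: power2_eq_square\<close>)
    finally have "norm (uu k q j n) / norm (1 - k) \<le> Cst k q * norm q ^ n / norm (1 - k)"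
      using k1 by (intro divide_right_mono) auto
    thus ?thesis by (simp add: V_def c_def norm_divide)
  qed
  have Vnorm: "summable (\<lambda>n. norm (V j n))" for j
    by (rule summable_comparison_test[OF _ summable_mult[OF summable_geometric]])
       (use q Vbound in auto)
  define F where "F = (\<lambda>(j::nat, n::nat). (1 - k * q ^ (2 * n + 2 * j)) * (1 + qpow q (2 * r * real j))
            * qpoch k q n * qpoch k q (n + 2 * j)
            * qpow q (s * real j ^ 2 - real j * r + 2 * real n * real j + real n ^ 2) * (-1) ^ j
            / ((1 - k) * qpoch q q n * qpoch q q (n + 2 * j)))"
  have Feq: "F (j, n) = W j * V j n" for j n
  proof -
    have ex: "s * real j ^ 2 - real j * r + 2 * real n * real j + real n ^ 2
        = real (j * j) * s + (real j * (- r) + real (2 * n * j + n ^ 2))"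
      by (simp add: algebra_simps power2_eq_square)
    have p1: "qpow q (s * real j ^ 2 - real j * r + 2 * real n * real j + real n ^ 2)
        = A ^ (j * j) * (inverse B ^ j * q ^ (2 * n * j + n ^ 2))"
      unfolding ex qpow_add qpow_nat_mult qpow_minus qpow_nat[OF q0] A_def B_def ..
    have p2: "qpow q (2 * r * real j) = (B ^ 2) ^ j"
    proof -
      have "2 * r * real j = real j * (real 2 * r)" by simp
      thus ?thesis unfolding B_def by (simp only: qpow_nat_mult)
    qed
    have p3: "(1 + (B^2)^j) * inverse B ^ j = B ^ j + inverse B ^ j" by (rule pow_inv_aux[OF B0])
    show ?thesis unfolding F_def W_def V_def uu_def split p1 p2 using p3[symmetric]
      by (simp add: field_simps)
  qed
  have Fsumm: "F summable_on UNIV"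
  proof -
    define g where "g = (\<lambda>(j::nat, n::nat). norm (W j) * c * norm q ^ n)"
    have gsum: "g summable_on UNIV"
    proof -
      have "g summable_on Sigma UNIV (\<lambda>_. UNIV)"
      proof (rule summable_on_SigmaI)
        fix j :: nat
        have "(\<lambda>n. norm (W j) * c * norm q ^ n) sums (norm (W j) * c * (1 / (1 - norm q)))"
          using q by (intro sums_mult geometric_sums) auto
        thus "((\<lambda>n. g (j, n)) has_sum (norm (W j) * c * (1 / (1 - norm q)))) UNIV"
          unfolding g_def using c0 by (intro sums_nonneg_imp_has_sum) auto
      next
        show "(\<lambda>j. norm (W j) * c * (1 / (1 - norm q))) summable_on UNIV"
        proof (rule norm_summable_imp_summable_on)
          have "summable (\<lambda>j. norm (W j) * (c * (1 / (1 - norm q))))"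
            by (rule summable_mult2[OF Wnorm])
          thus "summable (\<lambda>j. norm (norm (W j) * c * (1 / (1 - norm q))))"
            using c0 q by (simp add: mult.assoc)
        qed
      next
        fix j n show "0 \<le> g (j, n)" using c0 by (simp add: g_def)
      qed
      thus ?thesis by simp
    qed
    have "(\<lambda>x. norm (F x)) summable_on UNIV"
    proof (rule Infinite_Sum.abs_summable_on_comparison_test'[OF gsum])
      fix x :: "nat \<times> nat"
      obtain j n where x: "x = (j, n)" by (cases x)
      have "norm (F x) = norm (W j) * norm (V j n)" by (simp add: x Feq norm_mult)
      also have "\<dots> \<le> norm (W j) * (c * norm q ^ n)" by (intro mult_left_mono Vbound) auto
      finally show "norm (F x) \<le> g x" by (simp add: x g_def mult_ac)
    qed
    thus ?thesis by (simp add: summable_on_iff_abs_summable_on_complex)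
  qed
  have main: "(F has_sum ((\<theta> + 1) * L)) UNIV"
  proof -
    have "(F has_sum ((\<theta> + 1) * L)) (Sigma UNIV (\<lambda>_. UNIV))"
    proof (rule has_sum_SigmaI[where g = "\<lambda>j. W j * L"])
      fix j :: nat
      have "(V j has_sum L) UNIV" by (rule norm_summable_imp_has_sum[OF Vnorm Vsum])
      hence "((\<lambda>n. W j * V j n) has_sum (W j * L)) UNIV" by (rule has_sum_cmult_right)
      thus "((\<lambda>n. F (j, n)) has_sum (W j * L)) UNIV" by (simp add: Feq)
    next
      have "(W has_sum (\<theta> + 1)) UNIV" by (rule norm_summable_imp_has_sum[OF Wnorm Wsum])
      thus "((\<lambda>j. W j * L) has_sum ((\<theta> + 1) * L)) UNIV" by (rule has_sum_cmult_left)
    next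
      show "F summable_on Sigma UNIV (\<lambda>_. UNIV)" using Fsumm by simp
    qed
    thus ?thesis by simp
  qed
  have val: "(\<theta> + 1) * L = qpoch_inf (k * q) q * qpoch_inf (qpow q (s - r)) (qpow q (2 * s))
              * qpoch_inf (qpow q (s + r)) (qpow q (2 * s)) * qpoch_inf (qpow q (2 * s)) (qpow q (2 * s))
              / qpoch_inf q q
            + qpoch_inf (k * q) q / qpoch_inf q q"
    unfolding \<theta>_def L_def using qpoch_inf_qq_nz[OF q] by (simp add: field_simps)
  have e235: "qpow q 2 = q^2" "qpow q 3 = q^3" "qpow q 5 = q^5"
    using qpow_nat[OF q0, of 2] qpow_nat[OF q0, of 3] qpow_nat[OF q0, of 5] by simp_all
  show ?thesis
    apply (rule conjI)
    subgoal using main unfolding val F_def .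
    subgoal using e235 special_case[OF q, of k] by (intro impI, elim conjE, hypsubst) simp
    done
qed


end
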